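(* Let $n$ be a non-negative integer and $r,s\in\mathbb{C}\setminus\mathbb{Z}^{-}$ with $s\neq0$ and $r-s\notin\mathbb{Z}^{-}$. Then \[ \sum_{k=0}^{n}\binom{n}{k}\frac{1}{(k+2)(k+s)\binom{n+r}{k+s}}=\sum_{k=0}^{n}\binom{n}{k}\frac{(-1)^k}{(k+1)(k+2)(k+s)\binom{k+r}{k+s}}. \]
   Context: $\mathbb{Z}^{-}$ denotes the set of negative integers. Binomial coefficients with complex entries: $\binom{x}{y}=\frac{\Gamma(x+1)}{\Gamma(y+1)\Gamma(x-y+1)}$. *)

theory Defs
  imports "HOL-Analysis.Analysis"
begin

definition cbinom :: "complex \<Rightarrow> complex \<Rightarrow> complex" where
  "cbinom x y = Gamma (x + 1) / (Gamma (y + 1) * Gamma (x - y + 1))"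

end

theory Submission
  imports Defs
begin

lemma alt_rec:
  fixes f :: "nat \<Rightarrow> nat \<Rightarrow> complex"
  assumes rec: "\<And>k m. f k (Suc m) = f k m - f (Suc k) m"
  shows "f k m = (\<Sum>j\<le>m. of_nat (m choose j) * (-1)^j * f (k+j) 0)"
proof (induction m arbitrary: k)
  case 0 then show ?case by simp
next
  case (Suc m)
  have "f k (Suc m) = f k m - f (Suc k) m" by (rule rec)
  also have "\<dots> = (\<Sum>j\<le>m. of_nat (m choose j) * (-1)^j * f (k+j) 0)
       - (\<Sum>j\<le>m. of_nat (m choose j) * (-1)^j * f (Suc k+j) 0)" using Suc by simp
  also have "(\<Sum>j\<le>m. of_nat (m choose j) * (-1)^j * f (k+j) 0)
      = f k 0 + (\<Sum>j\<le>m. of_nat (m choose Suc j) * (-1)^(Suc j) * f (Suc k+j) 0)"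
  proof -
    have "(\<Sum>j\<le>m. of_nat (m choose j) * (-1)^j * f (k+j) 0)
        = (\<Sum>j\<le>Suc m. of_nat (m choose j) * (-1)^j * f (k+j) 0)" by simp
    also have "\<dots> = f k 0 + (\<Sum>j\<le>m. of_nat (m choose Suc j) * (-1)^(Suc j) * f (Suc k+j) 0)"
      by (subst sum.atMost_Suc_shift) simp
    finally show ?thesis .
  qed
  also have "(\<Sum>j\<le>Suc m. of_nat (Suc m choose j) * (-1)^j * f (k+j) 0)
      = f k 0 + (\<Sum>j\<le>m. of_nat (Suc m choose Suc j) * (-1)^(Suc j) * f (Suc k+j) 0)"
    by (subst sum.atMost_Suc_shift) simp
  moreover have "(\<Sum>j\<le>m. of_nat (Suc m choose Suc j) * (-1)^(Suc j) * f (Suc k+j) 0)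
     = (\<Sum>j\<le>m. of_nat (m choose Suc j) * (-1)^(Suc j) * f (Suc k+j) 0)
      - (\<Sum>j\<le>m. of_nat (m choose j) * (-1)^j * f (Suc k+j) 0)"
    by (subst sum_subtractf[symmetric], rule sum.cong, simp, simp add: algebra_simps)
  ultimately show ?case by simp
qed

lemma np1:
  fixes z :: complex
  assumes "z \<notin> {of_int m | m. m < 0}"
  shows "z + of_nat j + 1 \<notin> \<int>\<^sub>\<le>\<^sub>0"
proof
  assume "z + of_nat j + 1 \<in> \<int>\<^sub>\<le>\<^sub>0"
  then obtain m where m: "m \<le> 0" "z + of_nat j + 1 = of_int m" by (auto elim!: nonpos_Ints_cases)
  then have "z = of_int (m - int j - 1)" by (simp add: algebra_simps)
  moreover have "m - int j - 1 < 0" using m(1) by simp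
  ultimately show False using assms by blast
qed

lemma np0:
  fixes z :: complex
  assumes "z \<notin> {of_int m | m. m < 0}" "z \<noteq> 0"
  shows "z + of_nat j \<notin> \<int>\<^sub>\<le>\<^sub>0"
proof
  assume "z + of_nat j \<in> \<int>\<^sub>\<le>\<^sub>0"
  then obtain m where m: "m \<le> 0" "z + of_nat j = of_int m" by (auto elim!: nonpos_Ints_cases)
  then have "z = of_int (m - int j)" by (simp add: algebra_simps)
  show False
  proof (cases "m - int j < 0")
    case True then show False using assms \<open>z = _\<close> by blast
  next
    case False then have "m = 0" "j = 0" using m(1) by auto
    then show False using assms \<open>z = _\<close> by simp
  qed
qed

lemma beta_sum:
  "(\<Sum>j\<le>i. of_nat (i choose j) * (-1)^j / (of_nat j + 2 :: complex)) = 1 / ((of_nat i + 1) * (of_nat i + 2))"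
proof -
  define f :: "nat \<Rightarrow> nat \<Rightarrow> complex" where "f k m = fact k * fact m / fact (k + m + 1)" for k m
  have rec: "f k (Suc m) = f k m - f (Suc k) m" for k m
  proof -
    have "f k (Suc m) + f (Suc k) m = f k m"
      unfolding f_def
      by (simp add: field_simps fact_Suc del: of_nat_Suc) (simp add: algebra_simps)
    then show ?thesis by (simp add: algebra_simps)
  qed
  have "f 1 i = (\<Sum>j\<le>i. of_nat (i choose j) * (-1)^j * f (1+j) 0)" by (rule alt_rec[of f, OF rec])
  moreover have "f (1+j) 0 = 1 / (of_nat j + 2)" for j
    unfolding f_def by (simp add: fact_Suc field_simps del: of_nat_Suc) (simp add: of_nat_Suc)
  moreover have "f 1 i = 1 / ((of_nat i + 1) * (of_nat i + 2))"
  proof -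
    have "fact (1 + i + 1) = (of_nat i + 2) * (of_nat i + 1) * (fact i :: complex)"
      by (simp add: fact_Suc of_nat_Suc algebra_simps)
    moreover have "(of_nat (i+1)::complex) \<noteq> 0" "(of_nat (i+2)::complex) \<noteq> 0"
      by (simp only: of_nat_eq_0_iff; simp)+
    ultimately show ?thesis unfolding f_def by (simp add: mult.commute)
  qed
  ultimately show ?thesis by simp
qed


lemma sign_diff: "k \<le> i \<Longrightarrow> (-1::complex)^(i-k) = (-1)^i * (-1)^k"
proof -
  assume "k \<le> i"
  then have "(-1::complex)^i = (-1)^(i-k) * (-1)^k" by (simp add: power_add[symmetric])
  then have "(-1::complex)^i * (-1)^k = (-1)^(i-k) * ((-1)^k * (-1)^k)" by (simp add: algebra_simps)
  also have "(-1::complex)^k * (-1)^k = 1" by (simp add: power_add[symmetric] power_mult_distrib[symmetric])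
  finally show ?thesis by simp
qed

lemma aux_div:
  fixes X P Q R :: complex
  assumes "X \<noteq> 0" "P \<noteq> 0" "Q \<noteq> 0" "R \<noteq> 0"
  shows "X * (R / ((X * P) * Q)) = 1 / (P * Q / R)"
  using assms by (simp add: field_simps)

theorem theorem20:
  fixes n :: nat and r s :: complex
  assumes "r \<notin> {of_int m | m. m < 0}"
    and "s \<notin> {of_int m | m. m < 0}"
    and "s \<noteq> 0"
    and "r - s \<notin> {of_int m | m. m < 0}"
  shows "(\<Sum>k=0..n. of_nat (n choose k) /
            ((of_nat k + 2) * (of_nat k + s) * cbinom (of_nat n + r) (of_nat k + s)))
       = (\<Sum>k=0..n. of_nat (n choose k) * (-1) ^ k /
            ((of_nat k + 1) * (of_nat k + 2) * (of_nat k + s) * cbinom (of_nat k + r) (of_nat k + s)))"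
proof -
  define a where "a = r - s"
  define G where "G k m = Gamma (of_nat k + s) * Gamma (of_nat m + a + 1) / Gamma (of_nat (k+m) + r + 1)" for k m
  have hr: "of_nat j + r + 1 \<notin> \<int>\<^sub>\<le>\<^sub>0" for j
    using np1[OF assms(1), of j] by (simp add: add_ac)
  have hs: "of_nat j + s \<notin> \<int>\<^sub>\<le>\<^sub>0" for j
    using np0[OF assms(2,3), of j] by (simp add: add_ac)
  have ha: "of_nat j + a + 1 \<notin> \<int>\<^sub>\<le>\<^sub>0" for j
    using np1[OF assms(4), of j] by (simp add: add_ac a_def)
  have nz0: "x \<notin> \<int>\<^sub>\<le>\<^sub>0 \<Longrightarrow> x \<noteq> 0" for x :: complex by auto
  have rec: "G k (Suc m) = G k m - G (Suc k) m" for k m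
  proof -
    define A where "A = of_nat k + s"
    define B where "B = of_nat m + a + 1"
    define C where "C = of_nat (k+m) + r + 1"
    have CAB: "C = A + B" unfolding A_def B_def C_def a_def by simp
    have A: "A \<notin> \<int>\<^sub>\<le>\<^sub>0" unfolding A_def by (rule hs)
    have B: "B \<notin> \<int>\<^sub>\<le>\<^sub>0" unfolding B_def by (rule ha)
    have C: "C \<notin> \<int>\<^sub>\<le>\<^sub>0" unfolding C_def by (rule hr)
    have e1: "Gamma (of_nat (Suc k) + s) = A * Gamma A"
      using Gamma_plus1[OF A] unfolding A_def by (simp add: add_ac)
    have e2: "Gamma (of_nat (Suc m) + a + 1) = B * Gamma B"
      using Gamma_plus1[OF B] unfolding B_def by (simp add: add_ac)
    have e3: "Gamma (of_nat (k + Suc m) + r + 1) = C * Gamma C"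
      using Gamma_plus1[OF C] unfolding C_def by (simp add: add_ac)
    have e4: "Gamma (of_nat (Suc k + m) + r + 1) = C * Gamma C"
      using e3 by simp
    have GC: "Gamma C \<noteq> 0" using Gamma_nonzero[OF C] .
    have C0: "C \<noteq> 0" using nz0[OF C] .
    have "G k (Suc m) = Gamma A * (B * Gamma B) / (C * Gamma C)"
      unfolding G_def e2 e3 A_def by simp
    moreover have "G (Suc k) m = A * Gamma A * Gamma B / (C * Gamma C)"
      unfolding G_def e1 e4 B_def by simp
    moreover have Gkm: "G k m = Gamma A * Gamma B / Gamma C"
      unfolding G_def A_def B_def C_def by simp
    ultimately have "G k (Suc m) + G (Suc k) m = (A + B) * (Gamma A * Gamma B) / (C * Gamma C)"
      by (simp add: add_divide_distrib[symmetric] algebra_simps)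
    also have "\<dots> = G k m" using CAB C0 GC Gkm by simp
    finally show ?thesis by (simp add: algebra_simps)
  qed
  have T1: "of_nat (n choose k) / ((of_nat k + 2) * (of_nat k + s) * cbinom (of_nat n + r) (of_nat k + s))
      = of_nat (n choose k) / (of_nat k + 2) * G k (n - k)" if "k \<le> n" for k
  proof -
    have "(of_nat k + 2 :: complex) = of_nat (k+2)" by simp
    then have k2: "(of_nat k + 2 :: complex) \<noteq> 0" by (simp only: of_nat_eq_0_iff; simp)
    have e1: "Gamma (of_nat k + s + 1) = (of_nat k + s) * Gamma (of_nat k + s)"
      using Gamma_plus1[OF hs] .
    have e2: "of_nat n + r - (of_nat k + s) + 1 = of_nat (n-k) + a + 1"
      using that unfolding a_def by (simp add: of_nat_diff)
    have Gkn: "G k (n-k) = Gamma (of_nat k + s) * Gamma (of_nat (n-k) + a + 1) / Gamma (of_nat n + r + 1)"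
      unfolding G_def using that by simp
    have "(of_nat k + s) * cbinom (of_nat n + r) (of_nat k + s) = 1 / G k (n-k)"
      unfolding cbinom_def e1 e2 Gkn using nz0[OF hs[of k]] Gamma_nonzero[OF hs[of k]]
         Gamma_nonzero[OF ha[of "n-k"]] Gamma_nonzero[OF hr[of n]]
      by (intro aux_div)
    then show ?thesis by (subst mult.assoc) simp
  qed
  have T2: "of_nat (n choose k) * (-1) ^ k /
            ((of_nat k + 1) * (of_nat k + 2) * (of_nat k + s) * cbinom (of_nat k + r) (of_nat k + s))
      = of_nat (n choose k) * (-1) ^ k / ((of_nat k + 1) * (of_nat k + 2)) * G k 0" for k
  proof -
    have "(of_nat k + 2 :: complex) = of_nat (k+2)" by simp
    then have k2: "(of_nat k + 2 :: complex) \<noteq> 0" by (simp only: of_nat_eq_0_iff; simp)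
    have "(of_nat k + 1 :: complex) = of_nat (k+1)" by simp
    then have k1: "(of_nat k + 1 :: complex) \<noteq> 0" by (simp only: of_nat_eq_0_iff; simp)
    have e1: "Gamma (of_nat k + s + 1) = (of_nat k + s) * Gamma (of_nat k + s)"
      using Gamma_plus1[OF hs] .
    have e2: "of_nat k + r - (of_nat k + s) + 1 = of_nat 0 + a + 1"
      unfolding a_def by simp
    have "(of_nat k + s) * cbinom (of_nat k + r) (of_nat k + s) = 1 / G k 0"
      unfolding cbinom_def e1 e2 G_def using nz0[OF hs[of k]] Gamma_nonzero[OF hs[of k]]
         Gamma_nonzero[OF ha[of 0]] Gamma_nonzero[OF hr[of k]]
      by (simp only: add_0_right, intro aux_div)
    then show ?thesis by (subst mult.assoc) simp
  qed
  define F where "F k j = of_nat (n choose k) / (of_nat k + 2) *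
      (of_nat ((n-k) choose j) * (-1)^j * G (k+j) 0)" for k j
  have "(\<Sum>k=0..n. of_nat (n choose k) /
            ((of_nat k + 2) * (of_nat k + s) * cbinom (of_nat n + r) (of_nat k + s)))
      = (\<Sum>k\<le>n. of_nat (n choose k) / (of_nat k + 2) * G k (n - k))"
    unfolding atLeast0AtMost by (rule sum.cong) (simp_all add: T1)
  also have "\<dots> = (\<Sum>k\<le>n. \<Sum>j\<le>n-k. F k j)"
    unfolding F_def by (subst alt_rec[of G, OF rec]) (simp add: sum_distrib_left)
  also have "\<dots> = (\<Sum>(k,j)\<in>Sigma {..n} (\<lambda>k. {..n-k}). F k j)"
    by (rule sum.Sigma) auto
  also have "Sigma {..n} (\<lambda>k. {..n-k}) = {(k,j). k+j \<le> n}" by auto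
  also have "(\<Sum>(k,j)\<in>{(k,j). k+j \<le> n}. F k j) = (\<Sum>i\<le>n. \<Sum>k\<le>i. F k (i-k))"
    by (rule sum.triangle_reindex_eq)
  also have "\<dots> = (\<Sum>i\<le>n. of_nat (n choose i) * (-1) ^ i / ((of_nat i + 1) * (of_nat i + 2)) * G i 0)"
  proof (rule sum.cong)
    fix i assume "i \<in> {..n}"
    then have i: "i \<le> n" by simp
    have "(\<Sum>k\<le>i. F k (i-k)) = (\<Sum>k\<le>i. (of_nat (n choose i) * (-1)^i * G i 0) *
        (of_nat (i choose k) * (-1)^k / (of_nat k + 2)))"
    proof (rule sum.cong)
      fix k assume "k \<in> {..i}"
      then have k: "k \<le> i" by simp
      have cm: "of_nat (n choose k) * of_nat ((n-k) choose (i-k)) = (of_nat (n choose i) * of_nat (i choose k) :: complex)"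
        using choose_mult[OF k i] by (metis of_nat_mult)
      show "F k (i-k) = (of_nat (n choose i) * (-1)^i * G i 0) *
        (of_nat (i choose k) * (-1)^k / (of_nat k + 2))"
        unfolding F_def using k sign_diff[OF k] cm
        by (simp add: field_simps)
    qed simp
    also have "\<dots> = (of_nat (n choose i) * (-1)^i * G i 0) / ((of_nat i + 1) * (of_nat i + 2))"
      unfolding sum_distrib_left[symmetric] beta_sum by simp
    finally show "(\<Sum>k\<le>i. F k (i-k)) = of_nat (n choose i) * (-1) ^ i / ((of_nat i + 1) * (of_nat i + 2)) * G i 0"
      by simp
  qed simp
  also have "\<dots> = (\<Sum>k=0..n. of_nat (n choose k) * (-1) ^ k /
            ((of_nat k + 1) * (of_nat k + 2) * (of_nat k + s) * cbinom (of_nat k + r) (of_nat k + s)))"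
    unfolding atLeast0AtMost by (rule sum.cong) (simp_all add: T2)
  finally show ?thesis .
qed
end
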